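(* Let $\lambda$ be a partition and let $T\xrightarrow{I}T'$ be an edge of the crystal skeleton $\mathsf{CS}(\lambda)$ with label the Dyck pattern interval $I$. Then there is an edge between $T$ and $T'$ in the dual equivalence graph $\mathsf{DE}(\lambda)$ if and only if $|I|=3$.
   Context: French notation; $|\lambda|=N$; $\mathsf{SYT}(\lambda)$ standard tableaux; reading word $\mathsf{row}(T)$ reads rows left to right from top row to bottom row. Standardization $\mathsf{std}$ of a semistandard tableau replaces the $a_j$ entries $j$, in reading order, by $a_1+\dots+a_{j-1}+1,\dots,a_1+\dots+a_j$. Crystal operator $f_i$ on semistandard tableaux: in the subword of $\mathsf{row}(b)$ of letters $i,i+1$, bracket each $i+1$ with an unbracketed $i$ to its right (parenthesis matching); $f_i$ changes the rightmost unbracketed $i$ to $i+1$. For a permutation $\pi$ of $[N]$ and $I=[i,i+2m]\subseteq[N]$, $m\ge1$, $I$ is a Dyck pattern interval of $\pi$ if the RSK insertion tableau of the subword $\pi|_I$ of letters in $I$ has bottom row $i,\dots,i+m$ and top row $i+m+1,\dots,i+2m$; a Dyck pattern interval of $T$ is one of $\mathsf{row}(T)$. The (labeled) crystal skeleton $\mathsf{CS}(\lambda)$ is the directed graph on $\mathsf{SYT}(\lambda)$ with, for each $T$ and each Dyck pattern interval $I=[i,i+2m]$ of $T$, an edge $T\xrightarrow{I}T'$ where $T'=\mathsf{std}(f_i(b))$ and $b$ is obtained from $T$ by replacing entries $i,\dots,i+m$ by $i$ and $i+m+1,\dots,i+2m$ by $i+1$. (Equivalently it is obtained from the crystal $B(\lambda)_n$,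 $n\ge N$, by contracting each quasi-crystal $\{b:\mathsf{std}(b)=T\}$ to a vertex.) The dual equivalence graph $\mathsf{DE}(\lambda)$ has vertex set $\mathsf{SYT}(\lambda)$ and an edge $T$—$D_i(T)$ for $1<i<N$, where on reading words $D_i$ acts by $\ldots i\ldots i{+}1\ldots i{-}1\ldots \leftrightarrow \ldots i{-}1\ldots i{+}1\ldots i\ldots$ and $\ldots i\ldots i{-}1\ldots i{+}1\ldots\leftrightarrow\ldots i{+}1\ldots i{-}1\ldots i\ldots$ (only the letters $i-1,i,i+1$ change), and is undefined otherwise. *)

theory Defs
  imports Main
begin

text \<open>A tableau is a list of rows, the first row being the bottom (longest) row
(French notation). Entries are natural numbers.\<close>

type_synonym tableau = "nat list list"

definition is_partition :: "nat list \<Rightarrow> bool" where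
  "is_partition lam \<longleftrightarrow> sorted (rev lam) \<and> (\<forall>x\<in>set lam. 0 < x)"

definition shape :: "tableau \<Rightarrow> nat list" where
  "shape T = map length T"

definition row_word :: "tableau \<Rightarrow> nat list" where
  "row_word T = concat (rev T)"

definition SYT :: "nat list \<Rightarrow> tableau set" where
  "SYT lam = {T. shape T = lam \<and> distinct (concat T) \<and> set (concat T) = {1..sum_list lam}
     \<and> (\<forall>r\<in>set T. sorted_wrt (<) r)
     \<and> (\<forall>j k. Suc j < length T \<and> k < length (T ! Suc j) \<longrightarrow>
            k < length (T ! j) \<and> T ! j ! k < T ! Suc j ! k)}"

fun chunks :: "nat list \<Rightarrow> 'a list \<Rightarrow> 'a list list" where
  "chunks [] w = []"
| "chunks (l # ls) w = take l w # chunks ls (drop l w)"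

definition tab_of_word :: "nat list \<Rightarrow> nat list \<Rightarrow> tableau" where
  "tab_of_word sh w = rev (chunks (rev sh) w)"

definition std_word :: "nat list \<Rightarrow> nat list" where
  "std_word w = map (\<lambda>p. length (filter (\<lambda>y. y < w ! p) w)
                        + length (filter (\<lambda>y. y = w ! p) (take p w)) + 1) [0..<length w]"

definition std_tab :: "tableau \<Rightarrow> tableau" where
  "std_tab b = tab_of_word (shape b) (std_word (row_word b))"

text \<open>Positions (in the word) of the unbracketed letters i: scanning left to right,
each i+1 opens a bracket which is closed by the next unbracketed i to its right.
Arguments: i, number of currently open i+1's, current position, remaining word.\<close>
fun unbr :: "nat \<Rightarrow> nat \<Rightarrow> nat \<Rightarrow> nat list \<Rightarrow> nat list" where
  "unbr i c p [] = []"
| "unbr i c p (x # xs) =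
     (if x = Suc i then unbr i (Suc c) (Suc p) xs
      else if x = i then (if 0 < c then unbr i (c - 1) (Suc p) xs else p # unbr i c (Suc p) xs)
      else unbr i c (Suc p) xs)"

definition f_word :: "nat \<Rightarrow> nat list \<Rightarrow> nat list option" where
  "f_word i w = (let ps = unbr i 0 0 w in
      if ps = [] then None else Some (w[last ps := Suc i]))"

definition f_tab :: "nat \<Rightarrow> tableau \<Rightarrow> tableau option" where
  "f_tab i b = map_option (tab_of_word (shape b)) (f_word i (row_word b))"

definition row_ins :: "nat \<Rightarrow> nat list \<Rightarrow> nat list \<times> nat option" where
  "row_ins x r = (let a = takeWhile (\<lambda>y. y \<le> x) r; b = dropWhile (\<lambda>y. y \<le> x) r in
      if b = [] then (r @ [x], None) else (a @ x # tl b, Some (hd b)))"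

fun tab_ins :: "nat \<Rightarrow> tableau \<Rightarrow> tableau" where
  "tab_ins x [] = [[x]]"
| "tab_ins x (r # rs) = (case row_ins x r of
       (r', None) \<Rightarrow> r' # rs
     | (r', Some y) \<Rightarrow> r' # tab_ins y rs)"

definition rsk_P :: "nat list \<Rightarrow> tableau" where
  "rsk_P w = foldl (\<lambda>T x. tab_ins x T) [] w"

definition dyck_interval :: "nat list \<Rightarrow> nat \<Rightarrow> nat \<Rightarrow> bool" where
  "dyck_interval pi i m \<longleftrightarrow> 1 \<le> m \<and> 1 \<le> i \<and> i + 2 * m \<le> length pi \<and>
     rsk_P (filter (\<lambda>x. i \<le> x \<and> x \<le> i + 2 * m) pi)
       = [[i..<i + m + 1], [i + m + 1..<i + 2 * m + 1]]"

definition collapse :: "nat \<Rightarrow> nat \<Rightarrow> tableau \<Rightarrow> tableau" where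
  "collapse i m T = map (map (\<lambda>x. if i \<le> x \<and> x \<le> i + m then i
                                  else if i + m < x \<and> x \<le> i + 2 * m then Suc i else x)) T"

definition cs_edge :: "nat list \<Rightarrow> tableau \<Rightarrow> nat set \<Rightarrow> tableau \<Rightarrow> bool" where
  "cs_edge lam T I T' \<longleftrightarrow> T \<in> SYT lam \<and>
     (\<exists>i m. I = {i..i + 2 * m} \<and> dyck_interval (row_word T) i m \<and>
        (\<exists>b'. f_tab i (collapse i m T) = Some b' \<and> T' = std_tab b'))"

definition swap_vals :: "nat \<Rightarrow> nat \<Rightarrow> nat \<Rightarrow> nat" where
  "swap_vals a b x = (if x = a then b else if x = b then a else x)"

definition D_op :: "nat \<Rightarrow> tableau \<Rightarrow> tableau option" where
  "D_op i T = (let w = row_word T;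
                   a = the (List.find (\<lambda>k. w ! k = i - 1) [0..<length w]);
                   b = the (List.find (\<lambda>k. w ! k = i) [0..<length w]);
                   c = the (List.find (\<lambda>k. w ! k = i + 1) [0..<length w]) in
     if (b < c \<and> c < a) \<or> (a < c \<and> c < b) then Some (map (map (swap_vals (i - 1) i)) T)
     else if (b < a \<and> a < c) \<or> (c < a \<and> a < b) then Some (map (map (swap_vals i (i + 1))) T)
     else None)"

definition de_adj :: "nat list \<Rightarrow> tableau \<Rightarrow> tableau \<Rightarrow> bool" where
  "de_adj lam T T' \<longleftrightarrow> T \<in> SYT lam \<and> T' \<in> SYT lam \<and>
     (\<exists>i. 1 < i \<and> i < sum_list lam \<and> (D_op i T = Some T' \<or> D_op i T' = Some T))"

end

theory Submission
  imports Defs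
begin

fun cnb :: "nat \<Rightarrow> nat \<Rightarrow> nat list \<Rightarrow> nat" where
  "cnb M c [] = c"
| "cnb M c (x # xs) = cnb M (if M < x then Suc c else c - 1) xs"

lemma cnb_append: "cnb M c (xs @ ys) = cnb M (cnb M c xs) ys"
  by (induction xs arbitrary: c) auto

lemma cnb_le: "cnb M c xs \<le> c + length (filter (\<lambda>x. M < x) xs)"
proof (induction xs arbitrary: c)
  case Nil then show ?case by simp
next
  case (Cons x xs)
  show ?case using Cons[of "if M < x then Suc c else c - 1"] by auto
qed

definition expP :: "nat \<Rightarrow> nat list \<Rightarrow> nat list list" where
  "expP M p = (let S = filter (\<lambda>x. x \<le> M) p; B = filter (\<lambda>x. M < x) p;
      k = length B - cnb M 0 p in (S @ drop k B) # (if k = 0 then [] else [take k B]))"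

definition BadP :: "nat \<Rightarrow> nat list list \<Rightarrow> bool" where
  "BadP M P \<longleftrightarrow> 3 \<le> length P \<or> (2 \<le> length P \<and> ((\<exists>y\<in>set (P!1). y \<le> M)
      \<or> (\<exists>y\<in>set (P!0). \<exists>z\<in>set (P!1). M < y \<and> y < z)))"

lemma row_ins_None: "row_ins x r = (r', None) \<Longrightarrow> r' = r @ [x] \<and> (\<forall>y\<in>set r. y \<le> x)"
  unfolding row_ins_def Let_def
  by (auto split: if_splits simp: dropWhile_eq_Nil_conv)

lemma row_ins_Some: "row_ins x r = (r', Some b) \<Longrightarrow>
   x \<in> set r' \<and> b \<in> set r \<and> x < b \<and> set r \<subseteq> insert b (set r')
   \<and> b = hd (dropWhile (\<lambda>y. y \<le> x) r)"
proof -
  assume h: "row_ins x r = (r', Some b)"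
  let ?a = "takeWhile (\<lambda>y. y \<le> x) r" and ?d = "dropWhile (\<lambda>y. y \<le> x) r"
  from h have ne: "?d \<noteq> []" and r': "r' = ?a @ x # tl ?d" and b: "b = hd ?d"
    unfolding row_ins_def Let_def by (auto split: if_splits)
  have rr: "r = ?a @ hd ?d # tl ?d" using ne by simp
  have "\<not> hd ?d \<le> x" using ne hd_dropWhile by blast
  moreover have "hd ?d \<in> set r" using ne by (metis hd_in_set set_dropWhileD)
  moreover have "set r \<subseteq> insert b (set r')" using rr r' b
    by (metis Un_iff insert_iff list.set(2) set_append subsetI)
  ultimately show ?thesis using r' b by auto
qed

lemma row_ins_cases: "(\<exists>r'. row_ins x r = (r', None)) \<or> (\<exists>r' b. row_ins x r = (r', Some b))"
  by (cases "snd (row_ins x r)") (auto simp: prod_eq_iff)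

lemma row_ins_all_le: "\<forall>y\<in>set r. y \<le> x \<Longrightarrow> row_ins x r = (r @ [x], None)"
  unfolding row_ins_def Let_def by (simp add: dropWhile_eq_Nil_conv)

lemma row_ins_split: "\<forall>y\<in>set S. y \<le> x \<Longrightarrow> Q \<noteq> [] \<Longrightarrow> x < hd Q \<Longrightarrow>
   row_ins x (S @ Q) = (S @ x # tl Q, Some (hd Q))"
  unfolding row_ins_def Let_def
  by (cases Q) (auto simp: takeWhile_append2 dropWhile_append2)

lemma tab_ins_nonempty: "\<exists>r rs. tab_ins x P = r # rs \<and> x \<in> set r"
proof (cases P)
  case Nil then show ?thesis by simp
next
  case (Cons r0 rest)
  show ?thesis
  proof (cases "row_ins x r0")
    case (Pair r' ob)
    then show ?thesis using Cons row_ins_None[of x r0 r'] row_ins_Some[of x r0 r']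
      by (cases ob) auto
  qed
qed

lemma tab_ins_Some: "row_ins x r0 = (r', Some b) \<Longrightarrow> tab_ins x (r0 # rest) = r' # tab_ins b rest"
  by simp

lemma tab_ins_None: "row_ins x r0 = (r', None) \<Longrightarrow> tab_ins x (r0 # rest) = r' # rest"
  by simp

lemma tab_ins_length: "length P \<le> length (tab_ins x P)"
proof (induction P arbitrary: x)
  case Nil then show ?case by simp
next
  case (Cons r0 rest)
  show ?case
  proof (cases "row_ins x r0")
    case (Pair r' ob)
    then show ?thesis using Cons by (cases ob) auto
  qed
qed

lemma Bad_pres: "BadP M P \<Longrightarrow> BadP M (tab_ins x P)"
proof -
  assume B: "BadP M P"
  then have "2 \<le> length P" unfolding BadP_def by auto
  then obtain r0 r1 rest where P: "P = r0 # r1 # rest"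
    by (cases P; cases "tl P") auto
  show ?thesis
  proof (cases "3 \<le> length P")
    case True then show ?thesis using tab_ins_length[of P x] unfolding BadP_def by auto
  next
    case False
    then have rest: "rest = []" using P by (cases rest) auto
    have B2: "(\<exists>y\<in>set r1. y \<le> M) \<or> (\<exists>y\<in>set r0. \<exists>z\<in>set r1. M < y \<and> y < z)"
      using B False unfolding BadP_def P by auto
    consider (N) r' where "row_ins x r0 = (r', None)" | (S) r' b where "row_ins x r0 = (r', Some b)"
      using row_ins_cases by blast
    then show ?thesis
    proof cases
      case N
      then have t: "tab_ins x P = r' # r1 # rest" using P by simp
      have "set r0 \<subseteq> set r'" using row_ins_None[OF N] by auto
      then show ?thesis using B2 unfolding t BadP_def by auto
    next
      case S
      note s = row_ins_Some[OF S]
      consider (N2) r1' where "row_ins b r1 = (r1', None)" | (S2) r1' b2 where "row_ins b r1 = (r1', Some b2)"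
        using row_ins_cases by blast
      then show ?thesis
      proof cases
        case S2
        then have "tab_ins x P = r' # r1' # tab_ins b2 rest" using P S by simp
        then have "3 \<le> length (tab_ins x P)" using tab_ins_nonempty[of b2 rest] by auto
        then show ?thesis unfolding BadP_def by auto
      next
        case N2
        note n2 = row_ins_None[OF N2]
        have t: "tab_ins x P = r' # (r1 @ [b]) # rest" using P S N2 n2 by simp
        from B2 show ?thesis
        proof
          assume "\<exists>y\<in>set r1. y \<le> M" then show ?thesis unfolding t BadP_def by auto
        next
          assume "\<exists>y\<in>set r0. \<exists>z\<in>set r1. M < y \<and> y < z"
          then obtain y z where y: "y \<in> set r0" "z \<in> set r1" "M < y" "y < z" by blast
          show ?thesis
          proof (cases "y = b")
            case True
            then show ?thesis using n2 y by auto
          next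
            case False
            then have "y \<in> set r'" using s y by auto
            then show ?thesis unfolding t BadP_def using y by auto
          qed
        qed
      qed
    qed
  qed
qed

lemma rsk_step:
  assumes xp: "x \<notin> set p" and pne: "p \<noteq> []"
    and sS: "sorted_wrt (<) (filter (\<lambda>x. x \<le> M) p)"
    and sB: "sorted_wrt (<) (filter (\<lambda>x. M < x) p)"
  shows "BadP M (tab_ins x (expP M p)) \<or>
    (sorted_wrt (<) (filter (\<lambda>x. x \<le> M) (p @ [x])) \<and> sorted_wrt (<) (filter (\<lambda>x. M < x) (p @ [x]))
     \<and> tab_ins x (expP M p) = expP M (p @ [x]))"
proof -
  define S where "S = filter (\<lambda>x. x \<le> M) p"
  define B where "B = filter (\<lambda>x. M < x) p"
  define c where "c = cnb M 0 p"
  define k where "k = length B - c"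
  define Q where "Q = drop k B"
  define R where "R = take k B"
  define rest where "rest = (if k = 0 then [] else [R])"
  have cle: "c \<le> length B" using cnb_le[of M 0 p] unfolding c_def B_def by simp
  have E: "expP M p = (S @ Q) # rest"
    unfolding expP_def Let_def S_def B_def c_def k_def Q_def R_def rest_def by simp
  have BRQ: "B = R @ Q" unfolding R_def Q_def by simp
  have Sle: "\<forall>y\<in>set S. y \<le> M" unfolding S_def by simp
  have Bgt: "\<forall>y\<in>set B. M < y" unfolding B_def by simp
  have xS: "x \<notin> set S" "x \<notin> set B" using xp unfolding S_def B_def by auto
  have cx: "cnb M 0 (p @ [x]) = (if M < x then Suc c else c - 1)"
    unfolding c_def by (simp add: cnb_append)
  have sS': "sorted_wrt (<) S" using sS unfolding S_def .
  have sB': "sorted_wrt (<) B" using sB unfolding B_def .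
  show ?thesis
  proof (cases "x \<le> M")
    case xs: True
    have fS: "filter (\<lambda>x. x \<le> M) (p @ [x]) = S @ [x]" "filter (\<lambda>x. M < x) (p @ [x]) = B"
      using xs unfolding S_def B_def by auto
    show ?thesis
    proof (cases "\<forall>y\<in>set S. y < x")
      case all: True
      have sorted1: "sorted_wrt (<) (S @ [x])" using sS' all by (simp add: sorted_wrt_append)
      show ?thesis
      proof (cases "c = 0")
        case True
        have Q0: "Q = []" unfolding Q_def k_def True by simp
        have "row_ins x (S @ Q) = (S @ [x], None)" using row_ins_all_le[of "S @ Q" x] all Q0 by (auto simp: less_imp_le)
        then have "tab_ins x (expP M p) = (S @ [x]) # rest" unfolding E by simp
        moreover have "expP M (p @ [x]) = (S @ [x]) # rest"
          unfolding expP_def Let_def fS cx using xs True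
          by (simp add: rest_def k_def c_def[symmetric] Q0[unfolded Q_def k_def] R_def)
        ultimately show ?thesis using sorted1 sB' fS by simp
      next
        case False
        then have kl: "k < length B" unfolding k_def using cle by simp
        have Qne: "Q \<noteq> []" unfolding Q_def using kl by simp
        have hdQ: "hd Q = B ! k" unfolding Q_def using kl by (simp add: hd_drop_conv_nth)
        have hQ: "x < hd Q" using hdQ kl Bgt xs by (metis le_less_trans nth_mem)
        have "row_ins x (S @ Q) = (S @ x # tl Q, Some (hd Q))"
          using row_ins_split[OF _ Qne hQ, of S] all by (auto simp: less_imp_le)
        then have t1: "tab_ins x (expP M p) = (S @ x # tl Q) # tab_ins (hd Q) rest" unfolding E by simp
        have Rle: "\<forall>y\<in>set R. y \<le> hd Q"
        proof
          fix y assume "y \<in> set R"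
          then obtain a where a: "a < k" "y = B ! a" unfolding R_def using kl
            by (auto simp: in_set_conv_nth)
          then show "y \<le> hd Q" using sB' kl hdQ by (simp add: sorted_wrt_iff_nth_less less_imp_le)
        qed
        have t2: "tab_ins (hd Q) rest = [take (Suc k) B]"
        proof (cases "k = 0")
          case True
          then show ?thesis unfolding rest_def Q_def using kl by (simp add: take_Suc hd_drop_conv_nth)
        next
          case False
          then have "tab_ins (hd Q) rest = [R @ [hd Q]]" unfolding rest_def
            using row_ins_all_le[OF Rle] by simp
          then show ?thesis unfolding R_def hdQ using kl by (simp add: take_Suc_conv_app_nth)
        qed
        have tlQ: "tl Q = drop (Suc k) B" unfolding Q_def by (simp add: drop_Suc tl_drop)
        have "expP M (p @ [x]) = (S @ x # drop (Suc k) B) # [take (Suc k) B]"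
          unfolding expP_def Let_def fS cx using xs False kl cle
          by (simp add: k_def c_def[symmetric] Suc_diff_le)
        then show ?thesis using t1 t2 tlQ sorted1 sB' fS by simp
      qed
    next
      case False
      then obtain y where y: "y \<in> set S" "x < y" using xS by (metis linorder_neqE_nat)
      show ?thesis
      proof (cases "row_ins x (S @ Q)")
        case (Pair r' ob)
        show ?thesis
        proof (cases ob)
          case None
          then have "y \<le> x" using row_ins_None[of x "S @ Q" r'] Pair y by auto
          then show ?thesis using y by simp
        next
          case (Some b)
          note s = row_ins_Some[of x "S @ Q" r' b, OF Pair[unfolded Some]]
          have "dropWhile (\<lambda>z. z \<le> x) (S @ Q) = dropWhile (\<lambda>z. z \<le> x) S @ Q"
            using y by (intro dropWhile_append1) auto
          moreover have "dropWhile (\<lambda>z. z \<le> x) S \<noteq> []" using y by (force simp: dropWhile_eq_Nil_conv)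
          ultimately have "b \<in> set S" using s by (metis hd_append2 hd_in_set set_dropWhileD)
          then have bM: "b \<le> M" using Sle by auto
          obtain r1 rs where r1: "tab_ins b rest = r1 # rs" "b \<in> set r1" using tab_ins_nonempty by blast
          have "tab_ins x (expP M p) = r' # r1 # rs" unfolding E using Pair Some r1 by simp
          then show ?thesis unfolding BadP_def using r1 bM by auto
        qed
      qed
    qed
  next
    case xb: False
    have fS: "filter (\<lambda>x. x \<le> M) (p @ [x]) = S" "filter (\<lambda>x. M < x) (p @ [x]) = B @ [x]"
      using xb unfolding S_def B_def by auto
    show ?thesis
    proof (cases "\<forall>y\<in>set B. y < x")
      case all: True
      have sorted1: "sorted_wrt (<) (B @ [x])" using sB' all by (simp add: sorted_wrt_append)
      have "\<forall>y\<in>set (S @ Q). y \<le> x" using all Sle xb unfolding Q_def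
        by (auto dest!: in_set_dropD intro: less_imp_le)
      then have "row_ins x (S @ Q) = (S @ Q @ [x], None)" using row_ins_all_le by auto
      then have "tab_ins x (expP M p) = (S @ Q @ [x]) # rest" unfolding E by simp
      moreover have "expP M (p @ [x]) = (S @ Q @ [x]) # rest"
        unfolding expP_def Let_def fS cx using xb cle
        by (simp add: rest_def k_def c_def[symmetric] Q_def R_def)
      ultimately show ?thesis using sorted1 sS' fS unfolding S_def by simp
    next
      case False
      then obtain y where y: "y \<in> set B" "x < y" using xS by (metis linorder_neqE_nat)
      show ?thesis
      proof (cases "row_ins x (S @ Q)")
        case (Pair r' ob)
        show ?thesis
        proof (cases ob)
          case None
          note n = row_ins_None[of x "S @ Q" r', OF Pair[unfolded None]]
          have "y \<notin> set Q" using n y by (metis Un_iff leD set_append)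
          then have yR: "y \<in> set R" using y BRQ by (metis Un_iff set_append)
          then have "k \<noteq> 0" unfolding R_def by (cases k) auto
          then have "tab_ins x (expP M p) = r' # [R]" unfolding E rest_def using Pair None by simp
          then show ?thesis unfolding BadP_def using yR y n xb by auto
        next
          case (Some b)
          note s = row_ins_Some[of x "S @ Q" r' b, OF Pair[unfolded Some]]
          obtain r1 rs where r1: "tab_ins b rest = r1 # rs" "b \<in> set r1" using tab_ins_nonempty by blast
          have "tab_ins x (expP M p) = r' # r1 # rs" unfolding E using Pair Some r1 by simp
          then show ?thesis unfolding BadP_def using r1 s xb by auto
        qed
      qed
    qed
  qed
qed

lemma rsk_P_snoc: "rsk_P (p @ [x]) = tab_ins x (rsk_P p)"
  unfolding rsk_P_def by simp

lemma rsk_inv: "distinct p \<Longrightarrow> BadP M (rsk_P p) \<or>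
   (sorted_wrt (<) (filter (\<lambda>x. x \<le> M) p) \<and> sorted_wrt (<) (filter (\<lambda>x. M < x) p)
    \<and> rsk_P p = (if p = [] then [] else expP M p))"
proof (induction p rule: rev_induct)
  case Nil then show ?case by (simp add: rsk_P_def)
next
  case (snoc x p)
  then have d: "distinct p" "x \<notin> set p" by auto
  show ?case
  proof (cases "BadP M (rsk_P p)")
    case True then show ?thesis using Bad_pres by (simp add: rsk_P_snoc)
  next
    case False
    then have G: "sorted_wrt (<) (filter (\<lambda>x. x \<le> M) p)" "sorted_wrt (<) (filter (\<lambda>x. M < x) p)"
      "rsk_P p = (if p = [] then [] else expP M p)" using snoc d by auto
    show ?thesis
    proof (cases "p = []")
      case True
      then show ?thesis using G by (simp add: rsk_P_def expP_def)
    next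
      case False
      then show ?thesis using rsk_step[OF d(2) False G(1,2)] G(3) by (simp add: rsk_P_snoc)
    qed
  qed
qed

lemma rsk_dyck:
  assumes d: "distinct u" and m: "1 \<le> m"
    and P: "rsk_P u = [[i..<i + m + 1], [i + m + 1..<i + 2 * m + 1]]"
  shows "filter (\<lambda>x. x \<le> i + m) u = [i..<i + m + 1]"
    "filter (\<lambda>x. i + m < x) u = [i + m + 1..<i + 2 * m + 1]"
    "cnb (i + m) 0 u = 0"
proof -
  let ?M = "i + m"
  have nb: "\<not> BadP ?M (rsk_P u)" unfolding P BadP_def by auto
  with rsk_inv[OF d, of ?M] have G: "rsk_P u = (if u = [] then [] else expP ?M u)" by blast
  have une: "u \<noteq> []" using P G by auto
  define S where "S = filter (\<lambda>x. x \<le> ?M) u"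
  define B where "B = filter (\<lambda>x. ?M < x) u"
  define c where "c = cnb ?M 0 u"
  define k where "k = length B - c"
  have E: "(S @ drop k B) # (if k = 0 then [] else [take k B]) = [[i..<i + m + 1], [i + m + 1..<i + 2 * m + 1]]"
    using G une P unfolding expP_def Let_def S_def B_def c_def k_def by simp
  then have k0: "k \<noteq> 0" by (cases "k = 0") auto
  with E have E1: "S @ drop k B = [i..<i + m + 1]" and E2: "take k B = [i + m + 1..<i + 2 * m + 1]" by auto
  have "drop k B = []"
  proof (rule ccontr)
    assume "drop k B \<noteq> []"
    then obtain y where "y \<in> set (drop k B)" by (meson list.set_sel(1))
    then have yB: "y \<in> set B" "y \<in> set (S @ drop k B)" by (auto dest: in_set_dropD)
    from yB(2) have "y \<le> i + m" unfolding E1 by auto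
    then show False using yB(1) unfolding B_def by auto
  qed
  then have kB: "length B \<le> k" by simp
  show "filter (\<lambda>x. x \<le> i + m) u = [i..<i + m + 1]" using E1 \<open>drop k B = []\<close> S_def by simp
  show "filter (\<lambda>x. i + m < x) u = [i + m + 1..<i + 2 * m + 1]" using E2 kB B_def by simp
  show "cnb (i + m) 0 u = 0" using kB k0 unfolding k_def c_def by simp
qed

fun cn :: "nat \<Rightarrow> nat \<Rightarrow> nat list \<Rightarrow> nat" where
  "cn i c [] = c"
| "cn i c (x # xs) = cn i (if x = Suc i then Suc c else if x = i then c - 1 else c) xs"

abbreviation cnt :: "nat \<Rightarrow> nat list \<Rightarrow> nat" where
  "cnt a xs \<equiv> length (filter (\<lambda>y. y = a) xs)"

lemma cn_append: "cn i c (xs @ ys) = cn i (cn i c xs) ys"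
  by (induction xs arbitrary: c) auto

lemma unbr_append: "unbr i c p (xs @ ys) = unbr i c p xs @ unbr i (cn i c xs) (p + length xs) ys"
  by (induction xs arbitrary: c p) auto

lemma nth_shift: "Suc p \<le> q \<Longrightarrow> (x # xs) ! (q - p) = xs ! (q - Suc p)"
proof -
  assume "Suc p \<le> q"
  then obtain d where "q = Suc p + d" using le_Suc_ex by blast
  then show ?thesis by simp
qed

lemma unbr_set: "q \<in> set (unbr i c p xs) \<Longrightarrow> p \<le> q \<and> q < p + length xs \<and> xs ! (q - p) = i"
proof (induction xs arbitrary: c p)
  case Nil then show ?case by simp
next
  case (Cons x xs)
  have IH: "q \<in> set (unbr i c' (Suc p) xs) \<Longrightarrow> p \<le> q \<and> q < p + length (x # xs) \<and> (x # xs) ! (q - p) = i" for c'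
    using Cons.IH[of c' "Suc p"] nth_shift[of p q x xs] by simp
  show ?case
  proof (cases "x = Suc i")
    case True
    then show ?thesis using IH[of "Suc c"] Cons.prems by simp
  next
    case F1: False
    show ?thesis
    proof (cases "x = i")
      case True
      show ?thesis
      proof (cases "0 < c")
        case True
        then show ?thesis using IH[of "c - 1"] Cons.prems F1 \<open>x = i\<close> by simp
      next
        case False
        then show ?thesis using IH[of "c"] Cons.prems F1 \<open>x = i\<close> by auto
      qed
    next
      case False
      then show ?thesis using IH[of "c"] Cons.prems F1 by simp
    qed
  qed
qed

lemma cn_balance: "c + cnt (Suc i) xs + length (unbr i c p xs) = cn i c xs + cnt i xs"
proof (induction xs arbitrary: c p)
  case Nil then show ?case by simp
next
  case (Cons x xs)
  show ?case
  proof (cases "x = Suc i")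
    case True
    then show ?thesis using Cons.IH[of "Suc c" "Suc p"] by auto
  next
    case F1: False
    show ?thesis
    proof (cases "x = i")
      case True
      show ?thesis
      proof (cases "0 < c")
        case True
        then show ?thesis using Cons.IH[of "c - 1" "Suc p"] F1 \<open>x = i\<close> by auto
      next
        case False
        then show ?thesis using Cons.IH[of "c" "Suc p"] F1 \<open>x = i\<close> by auto
      qed
    next
      case False
      then show ?thesis using Cons.IH[of "c" "Suc p"] F1 by auto
    qed
  qed
qed

lemma cn_le: "cn i c xs \<le> c + cnt (Suc i) xs"
proof (induction xs arbitrary: c)
  case Nil then show ?case by simp
next
  case (Cons x xs)
  show ?case using Cons.IH[of "if x = Suc i then Suc c else if x = i then c - 1 else c"] by auto
qed

lemma cn_filter: "cn i c xs = cn i c (filter (\<lambda>x. x = i \<or> x = Suc i) xs)"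
  by (induction xs arbitrary: c) auto

definition gg :: "nat \<Rightarrow> nat \<Rightarrow> nat \<Rightarrow> nat" where
  "gg i m x = (if i \<le> x \<and> x \<le> i + m then i else if i + m < x \<and> x \<le> i + 2 * m then Suc i else x)"

lemma cn_map_gg: "\<forall>x\<in>set u. i \<le> x \<and> x \<le> i + 2 * m \<Longrightarrow> cn i c (map (gg i m) u) = cnb (i + m) c u"
proof (induction u arbitrary: c)
  case Nil then show ?case by simp
next
  case (Cons x u)
  have "gg i m x = (if i + m < x then Suc i else i)" using Cons.prems by (simp add: gg_def)
  then show ?case using Cons by simp
qed


lemma last_unbr:
  assumes ne: "unbr i 0 0 z \<noteq> []" and p0: "p0 = last (unbr i 0 0 z)"
  shows "p0 < length z" "z ! p0 = i" "cn i 0 (take p0 z) = 0"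
    "unbr i 0 (Suc p0) (drop (Suc p0) z) = []"
proof -
  have L: "last (unbr i 0 0 z) = p0" using p0 by simp
  have "p0 \<in> set (unbr i 0 0 z)" using ne L by (metis last_in_set)
  from unbr_set[OF this] show pl: "p0 < length z" and zp: "z ! p0 = i" by auto
  define z1 where "z1 = take p0 z"
  define z2 where "z2 = drop (Suc p0) z"
  have zz: "z = z1 @ i # z2" unfolding z1_def z2_def
    using id_take_nth_drop[OF pl] by (simp only: zp)
  have lz1: "length z1 = p0" unfolding z1_def using pl by simp
  define c1 where "c1 = cn i 0 z1"
  define U1 where "U1 = unbr i 0 0 z1"
  have U1: "\<forall>q\<in>set U1. q < p0"
  proof
    fix q assume "q \<in> set U1"
    from unbr_set[OF this[unfolded U1_def]] show "q < p0" using lz1 by simp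
  qed
  have U: "unbr i 0 0 z = U1 @ unbr i c1 p0 (i # z2)"
    unfolding zz unbr_append U1_def c1_def lz1 by simp
  have U2gt: "q \<in> set (unbr i c (Suc p0) z2) \<Longrightarrow> Suc p0 \<le> q" for c q
    using unbr_set[of q i c "Suc p0" z2] by simp
  show "cn i 0 (take p0 z) = 0"
  proof (rule ccontr)
    assume "cn i 0 (take p0 z) \<noteq> 0"
    then have "0 < c1" unfolding c1_def z1_def by simp
    then have "unbr i c1 p0 (i # z2) = unbr i (c1 - 1) (Suc p0) z2" by simp
    then have U': "unbr i 0 0 z = U1 @ unbr i (c1 - 1) (Suc p0) z2" using U by (simp only:)
    show False
    proof (cases "unbr i (c1 - 1) (Suc p0) z2 = []")
      case True
      then have "unbr i 0 0 z = U1" using U' by simp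
      then have "p0 \<in> set U1" using L ne by (metis last_in_set)
      then show False using U1 by auto
    next
      case False
      then have "p0 \<in> set (unbr i (c1 - 1) (Suc p0) z2)" using U' L by (metis last_appendR last_in_set)
      from U2gt[OF this] show False by simp
    qed
  qed
  then have "c1 = 0" unfolding c1_def z1_def by simp
  then have "unbr i c1 p0 (i # z2) = p0 # unbr i 0 (Suc p0) z2" by simp
  then have U': "unbr i 0 0 z = U1 @ p0 # unbr i 0 (Suc p0) z2" using U by (simp only:)
  show "unbr i 0 (Suc p0) (drop (Suc p0) z) = []"
  proof (rule ccontr)
    assume "unbr i 0 (Suc p0) (drop (Suc p0) z) \<noteq> []"
    then have "unbr i 0 (Suc p0) z2 \<noteq> []" unfolding z2_def .
    then have "last (unbr i 0 0 z) = last (unbr i 0 (Suc p0) z2)" "last (unbr i 0 (Suc p0) z2) \<in> set (unbr i 0 (Suc p0) z2)"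
      using U' by simp_all
    then have "p0 \<in> set (unbr i 0 (Suc p0) z2)" using L by simp
    from U2gt[OF this] show False by simp
  qed
qed

lemma nth_filter_count:
  assumes "q < length xs" "P (xs ! q)"
  shows "filter P xs ! length (filter P (take q xs)) = xs ! q"
    "length (filter P (take q xs)) < length (filter P xs)"
proof -
  have xs: "xs = take q xs @ xs ! q # drop (Suc q) xs" using assms(1) by (rule id_take_nth_drop)
  have "filter P xs = filter P (take q xs) @ xs ! q # filter P (drop (Suc q) xs)"
    using assms(2) by (subst xs) simp
  then show "filter P xs ! length (filter P (take q xs)) = xs ! q"
    "length (filter P (take q xs)) < length (filter P xs)" by (simp_all add: nth_append)
qed

lemma cnt_take_strict:
  assumes "q < q'" "q' \<le> length xs" "P (xs ! q)"
  shows "length (filter P (take q xs)) < length (filter P (take q' xs))"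
proof -
  have l: "q < length (take q' xs)" using assms by simp
  have "take q' xs = take q (take q' xs) @ (take q' xs) ! q # drop (Suc q) (take q' xs)"
    using l by (rule id_take_nth_drop)
  also have "... = take q xs @ xs ! q # drop (Suc q) (take q' xs)" using assms(1) by simp
  finally have e: "take q' xs = take q xs @ xs ! q # drop (Suc q) (take q' xs)" .
  show ?thesis using assms(3) by (subst e) simp
qed

lemma cnt_take_mono: "q \<le> q' \<Longrightarrow> length (filter P (take q xs)) \<le> length (filter P (take q' xs))"
proof -
  assume "q \<le> q'"
  then have "take q xs = take q (take q' xs)" by (simp add: min_def)
  then obtain r where "take q' xs = take q xs @ r" by (metis append_take_drop_id)
  then show ?thesis by simp
qed

lemma gg_eq_i: "gg i m y = i \<longleftrightarrow> i \<le> y \<and> y \<le> i + m"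
  by (auto simp: gg_def)

lemma gg_eq_Si: "1 \<le> m \<Longrightarrow> gg i m y = Suc i \<longleftrightarrow> i + m < y \<and> y \<le> i + 2 * m"
  by (auto simp: gg_def)

lemma std_nth: "q < length xs \<Longrightarrow> std_word xs ! q = length (filter (\<lambda>y. y < xs ! q) xs)
   + length (filter (\<lambda>y. y = xs ! q) (take q xs)) + 1"
  unfolding std_word_def by simp

lemma std_length: "length (std_word xs) = length xs"
  unfolding std_word_def by simp

locale wset =
  fixes w :: "nat list" and N i m :: nat
  assumes dist: "distinct w" and setw: "set w = {1..N}" and m1: "1 \<le> m" and i1: "1 \<le> i"
    and iN: "i + 2 * m \<le> N"
    and dyck: "rsk_P (filter (\<lambda>x. i \<le> x \<and> x \<le> i + 2 * m) w) = [[i..<i + m + 1], [i + m + 1..<i + 2 * m + 1]]"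
    and une: "unbr i 0 0 (map (gg i m) w) \<noteq> []"
begin

definition "z = map (gg i m) w"
definition "p0 = last (unbr i 0 0 z)"
definition "x0 = w ! p0"
definition "A q = length (filter (\<lambda>y. i \<le> y \<and> y \<le> i + m) (take q w))"
definition "Bc q = length (filter (\<lambda>y. i + m < y \<and> y \<le> i + 2 * m) (take q w))"

lemma lw: "length w = N"
  using distinct_card[OF dist] setw by simp

lemma lz: "length z = length w" unfolding z_def by simp

lemma p0_facts: "p0 < length w" "z ! p0 = i" "cn i 0 (take p0 z) = 0"
    "unbr i 0 (Suc p0) (drop (Suc p0) z) = []"
  using last_unbr[OF une[folded z_def] p0_def] lz by auto

lemma x0_range: "i \<le> x0" "x0 \<le> i + m"
  using p0_facts(1,2) unfolding x0_def z_def by (auto simp: gg_eq_i)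

lemma z_nth: "q < length w \<Longrightarrow> z ! q = gg i m (w ! q)" unfolding z_def by simp

lemma u_facts:
  "filter (\<lambda>y. i \<le> y \<and> y \<le> i + m) w = [i..<i + m + 1]"
  "filter (\<lambda>y. i + m < y \<and> y \<le> i + 2 * m) w = [i + m + 1..<i + 2 * m + 1]"
  "cnb (i + m) 0 (filter (\<lambda>x. i \<le> x \<and> x \<le> i + 2 * m) w) = 0"
proof -
  let ?u = "filter (\<lambda>x. i \<le> x \<and> x \<le> i + 2 * m) w"
  have du: "distinct ?u" using dist by simp
  note r = rsk_dyck[OF du m1 dyck]
  have "filter (\<lambda>x. x \<le> i + m) ?u = filter (\<lambda>y. i \<le> y \<and> y \<le> i + m) w"
    by (auto intro: filter_cong)
  then show "filter (\<lambda>y. i \<le> y \<and> y \<le> i + m) w = [i..<i + m + 1]" using r(1) by simp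
  have "filter (\<lambda>x. i + m < x) ?u = filter (\<lambda>y. i + m < y \<and> y \<le> i + 2 * m) w"
    by (auto intro: filter_cong)
  then show "filter (\<lambda>y. i + m < y \<and> y \<le> i + 2 * m) w = [i + m + 1..<i + 2 * m + 1]" using r(2) by simp
  show "cnb (i + m) 0 ?u = 0" using r(3) .
qed

lemma W1: "q < length w \<Longrightarrow> i \<le> w ! q \<Longrightarrow> w ! q \<le> i + m \<Longrightarrow> w ! q = i + A q"
proof -
  assume a: "q < length w" "i \<le> w ! q" "w ! q \<le> i + m"
  note f = nth_filter_count[of q w "\<lambda>y. i \<le> y \<and> y \<le> i + m", OF a(1)]
  have "A q < m + 1" using f(2) a unfolding A_def u_facts(1) by simp
  then show "w ! q = i + A q" using f(1) a unfolding A_def[symmetric] u_facts(1) by (simp del: upt_Suc)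
qed

lemma W2: "q < length w \<Longrightarrow> i + m < w ! q \<Longrightarrow> w ! q \<le> i + 2 * m \<Longrightarrow> w ! q = i + m + 1 + Bc q"
proof -
  assume a: "q < length w" "i + m < w ! q" "w ! q \<le> i + 2 * m"
  note f = nth_filter_count[of q w "\<lambda>y. i + m < y \<and> y \<le> i + 2 * m", OF a(1)]
  have "Bc q < m" using f(2) a unfolding Bc_def u_facts(2) by simp
  then show "w ! q = i + m + 1 + Bc q" using f(1) a unfolding Bc_def[symmetric] u_facts(2) by (simp del: upt_Suc)
qed

lemma cnt_i: "cnt i (take q z) = A q"
  unfolding z_def A_def take_map by (simp add: comp_def gg_eq_i)

lemma cnt_Si: "cnt (Suc i) (take q z) = Bc q"
  unfolding z_def Bc_def take_map using m1 by (simp add: comp_def gg_eq_Si)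

lemma A_tot: "A (length w) = m + 1" unfolding A_def using u_facts(1) by simp
lemma Bc_tot: "Bc (length w) = m" unfolding Bc_def using u_facts(2) by simp

lemma cn_z: "cn i 0 z = 0"
proof -
  have "filter (\<lambda>x. x = i \<or> x = Suc i) z = map (gg i m) (filter (\<lambda>x. i \<le> x \<and> x \<le> i + 2 * m) w)"
    unfolding z_def filter_map using m1 by (auto simp: comp_def gg_eq_i gg_eq_Si intro!: filter_cong arg_cong[where f = "map _"])
  then have "cn i 0 z = cn i 0 (map (gg i m) (filter (\<lambda>x. i \<le> x \<and> x \<le> i + 2 * m) w))"
    using cn_filter by metis
  also have "... = cnb (i + m) 0 (filter (\<lambda>x. i \<le> x \<and> x \<le> i + 2 * m) w)"
    by (rule cn_map_gg) simp
  finally show ?thesis using u_facts(3) by simp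
qed

lemma jk: "A p0 = Bc p0"
proof -
  define z1 where "z1 = take p0 z"
  define z2 where "z2 = drop (Suc p0) z"
  have zz: "z = z1 @ i # z2" unfolding z1_def z2_def
    using id_take_nth_drop[of p0 z] p0_facts(1,2) lz by simp
  have "cn i 0 z = cn i 0 z2" unfolding zz cn_append using p0_facts(3) z1_def by simp
  then have c2: "cn i 0 z2 = 0" using cn_z by simp
  have "0 + cnt (Suc i) z2 + length (unbr i 0 (Suc p0) z2) = cn i 0 z2 + cnt i z2" by (rule cn_balance)
  then have e: "cnt (Suc i) z2 = cnt i z2" using c2 p0_facts(4) z2_def by simp
  have "cnt i z = cnt i z1 + 1 + cnt i z2" "cnt (Suc i) z = cnt (Suc i) z1 + cnt (Suc i) z2"
    unfolding zz by simp_all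
  moreover have "cnt i z = m + 1" "cnt (Suc i) z = m"
    using cnt_i[of "length w"] cnt_Si[of "length w"] A_tot Bc_tot lz by simp_all
  moreover have "cnt i z1 = A p0" "cnt (Suc i) z1 = Bc p0" unfolding z1_def using cnt_i cnt_Si by simp_all
  ultimately show ?thesis using e by simp
qed

lemma x0_val: "x0 = i + A p0"
  using W1[OF p0_facts(1)] x0_range unfolding x0_def by simp

definition "hh y = (if y = x0 then Suc i else gg i m y)"
definition "v = std_word (z[p0 := Suc i])"

lemma w2_eq: "z[p0 := Suc i] = map hh w"
proof (rule nth_equalityI)
  show "length (z[p0 := Suc i]) = length (map hh w)" using lz by simp
next
  fix q assume "q < length (z[p0 := Suc i])"
  then have q: "q < length w" using lz by simp
  have "w ! q = x0 \<longleftrightarrow> q = p0" unfolding x0_def using nth_eq_iff_index_eq[OF dist q p0_facts(1)] .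
  then show "z[p0 := Suc i] ! q = map hh w ! q" using q lz unfolding hh_def z_def by simp
qed

lemma x0_in_take: "q \<le> length w \<Longrightarrow> x0 \<in> set (take q w) \<longleftrightarrow> p0 < q"
proof
  assume q: "q \<le> length w" and "x0 \<in> set (take q w)"
  then obtain r where r: "r < length (take q w)" "take q w ! r = x0" by (auto simp: in_set_conv_nth)
  then have "w ! r = w ! p0" "r < length w" unfolding x0_def by auto
  then have "r = p0" using nth_eq_iff_index_eq[OF dist _ p0_facts(1)] by blast
  then show "p0 < q" using r by simp
next
  assume "q \<le> length w" "p0 < q"
  then show "x0 \<in> set (take q w)" unfolding x0_def
    by (metis in_set_conv_nth length_take min.absorb2 nth_take)
qed

lemma notin_take: "q < length w \<Longrightarrow> w ! q \<notin> set (take q w)"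
proof
  assume q: "q < length w" and "w ! q \<in> set (take q w)"
  then obtain r where r: "r < length (take q w)" "take q w ! r = w ! q" by (auto simp: in_set_conv_nth)
  then have "w ! r = w ! q" "r < length w" by auto
  then have "r = q" using nth_eq_iff_index_eq[OF dist _ q] by blast
  then show False using r by simp
qed

lemma v1: "q < length w \<Longrightarrow> v ! q = card ({y. hh y < hh (w ! q)} \<inter> {1..N})
   + card ({y. hh y = hh (w ! q)} \<inter> set (take q w)) + 1"
proof -
  assume q: "q < length w"
  have d: "distinct (take q w)" using dist by simp
  have "v ! q = length (filter (\<lambda>y. y < hh (w ! q)) (map hh w))
      + length (filter (\<lambda>y. y = hh (w ! q)) (take q (map hh w))) + 1"
    unfolding v_def w2_eq using std_nth[of q "map hh w"] q by simp
  also have "... = card ({y. hh y < hh (w ! q)} \<inter> {1..N})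
   + card ({y. hh y = hh (w ! q)} \<inter> set (take q w)) + 1"
    unfolding take_map length_filter_map distinct_length_filter[OF dist] distinct_length_filter[OF d]
    using setw by (simp add: comp_def)
  finally show ?thesis .
qed

lemma A_card: "A q = card ({y. i \<le> y \<and> y \<le> i + m} \<inter> set (take q w))"
  unfolding A_def using dist by (simp add: distinct_length_filter)

lemma Bc_card: "Bc q = card ({y. i + m < y \<and> y \<le> i + 2 * m} \<inter> set (take q w))"
  unfolding Bc_def using dist by (simp add: distinct_length_filter)

lemma v_nth: "q < length w \<Longrightarrow> v ! q =
  (if w ! q < i \<or> i + 2 * m < w ! q then w ! q
   else if q = p0 then i + m + Bc q
   else if w ! q \<le> i + m then i + A q - (if p0 < q then 1 else 0)
   else i + m + Bc q + (if p0 < q then 1 else 0))"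
proof -
  assume q: "q < length w"
  define x where "x = w ! q"
  have xN: "1 \<le> x" "x \<le> N" using q setw unfolding x_def by (metis atLeastAtMost_iff nth_mem)+
  have xt: "x \<notin> set (take q w)" using notin_take[OF q] unfolding x_def .
  have x0t: "x0 \<in> set (take q w) \<longleftrightarrow> p0 < q" using x0_in_take q by simp
  note xr = x0_range
  have fin: "finite (set (take q w))" by simp
  show ?thesis
  proof (cases "x < i \<or> i + 2 * m < x")
    case True
    then have hx: "hh x = x" using xr unfolding hh_def gg_def by auto
    have s1: "{y. hh y < hh x} \<inter> {1..N} = {1..<x}" using True xr xN m1 unfolding hx
      by (auto simp: hh_def gg_def split: if_splits)
    have s2: "{y. hh y = hh x} \<inter> set (take q w) = {}" using True xr xt m1 unfolding hx
      by (auto simp: hh_def gg_def split: if_splits)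
    show ?thesis using v1[OF q] s1 s2 True xN unfolding x_def[symmetric] by simp
  next
    case False
    then have inr: "i \<le> x" "x \<le> i + 2 * m" by auto
    show ?thesis
    proof (cases "q = p0 \<or> i + m < x")
      case True
      have hx: "hh x = Suc i" using True inr xr unfolding hh_def gg_def x_def x0_def by auto
      have s1: "{y. hh y < hh x} \<inter> {1..N} = {1..<i} \<union> ({i..i + m} - {x0})" unfolding hx
        using xr iN i1 by (auto simp: hh_def gg_def split: if_splits)
      have c1: "card ({1..<i} \<union> ({i..i + m} - {x0})) = (i - 1) + m"
        using xr by (subst card_Un_disjoint) auto
      have s2: "{y. hh y = hh x} \<inter> set (take q w) =
          ({y. i + m < y \<and> y \<le> i + 2 * m} \<inter> set (take q w)) \<union> ({x0} \<inter> set (take q w))"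
        unfolding hx using xr m1 by (auto simp: hh_def gg_def split: if_splits)
      have c2: "card ({y. hh y = hh x} \<inter> set (take q w)) = Bc q + (if p0 < q then 1 else 0)"
        unfolding s2 Bc_card using xr x0t by (subst card_Un_disjoint) auto
      have "v ! q = i + m + Bc q + (if p0 < q then 1 else 0)"
        using v1[OF q] s1 c1 c2 i1 unfolding x_def[symmetric] by simp
      moreover have "q = p0 \<Longrightarrow> \<not> p0 < q" by simp
      ultimately show ?thesis using True False unfolding x_def[symmetric] by auto
    next
      case F2: False
      then have sm: "x \<le> i + m" "q \<noteq> p0" by auto
      have "x \<noteq> x0" using sm(2) q p0_facts(1) nth_eq_iff_index_eq[OF dist] unfolding x_def x0_def by blast
      then have hx: "hh x = i" using inr sm unfolding hh_def gg_def by auto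
      have s1: "{y. hh y < hh x} \<inter> {1..N} = {1..<i}" unfolding hx
        using xr iN i1 by (auto simp: hh_def gg_def split: if_splits)
      have s2: "{y. hh y = hh x} \<inter> set (take q w) =
          ({y. i \<le> y \<and> y \<le> i + m} \<inter> set (take q w)) - {x0}"
        unfolding hx using xr m1 by (auto simp: hh_def gg_def split: if_splits)
      have c2: "card ({y. hh y = hh x} \<inter> set (take q w)) = A q - (if p0 < q then 1 else 0)"
        unfolding s2 A_card using xr x0t by (simp add: card_Diff_singleton_if)
      have pos: "1 \<le> A q" if pq: "p0 < q"
      proof -
        have "x0 \<in> {y. i \<le> y \<and> y \<le> i + m} \<inter> set (take q w)" using xr x0t pq by simp
        then have "{y. i \<le> y \<and> y \<le> i + m} \<inter> set (take q w) \<noteq> {}" by blast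
        then show ?thesis unfolding A_card by (simp add: Suc_le_eq card_gt_0_iff)
      qed
      have "v ! q = card {1..<i} + (A q - (if p0 < q then 1 else 0)) + 1"
        using v1[OF q] s1 c2 unfolding x_def[symmetric] by simp
      also have "... = i + A q - (if p0 < q then 1 else 0)"
        using i1 pos by (cases "p0 < q") auto
      finally have "v ! q = i + A q - (if p0 < q then 1 else 0)" .
      moreover have "\<not> (w ! q < i \<or> i + 2 * m < w ! q)" "q \<noteq> p0" "w ! q \<le> i + m"
        using False F2 unfolding x_def by auto
      ultimately show ?thesis by simp
    qed
  qed
qed

lemma v_p0: "v ! p0 = w ! p0 + m"
proof -
  have "v ! p0 = i + m + Bc p0" using v_nth[OF p0_facts(1)] x0_range unfolding x0_def by auto
  then show ?thesis using x0_val jk unfolding x0_def by simp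
qed

lemma pos_of: "1 \<le> y \<Longrightarrow> y \<le> N \<Longrightarrow> \<exists>q < length w. w ! q = y"
  using setw by (metis atLeastAtMost_iff in_set_conv_nth)

lemma pos_uniq: "q < length w \<Longrightarrow> q' < length w \<Longrightarrow> w ! q = w ! q' \<Longrightarrow> q = q'"
  using nth_eq_iff_index_eq[OF dist] by blast

lemma A_strict: "q < q' \<Longrightarrow> q' \<le> length w \<Longrightarrow> i \<le> w ! q \<Longrightarrow> w ! q \<le> i + m \<Longrightarrow> A q < A q'"
  unfolding A_def by (rule cnt_take_strict) auto

lemma Bc_mono: "q \<le> q' \<Longrightarrow> Bc q \<le> Bc q'"
  unfolding Bc_def by (rule cnt_take_mono)

lemma z_seg: "a \<le> b \<Longrightarrow> b \<le> length z \<Longrightarrow> t < length (take (b - a) (drop a z)) \<Longrightarrow>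
   take (b - a) (drop a z) ! t = z ! (a + t) \<and> a + t < b"
  by simp

lemma case0:
  assumes m: "m = 1" and a0: "A p0 = 0"
  shows "\<exists>qb qc. qb < length w \<and> qc < length w \<and> w ! p0 = i \<and> w ! qb = Suc i \<and> w ! qc = i + 2
    \<and> p0 < qc \<and> qc < qb \<and> v = map (swap_vals i (Suc i)) w"
proof -
  have x0i: "w ! p0 = i" using x0_val a0 unfolding x0_def by simp
  have iN2: "i + 2 \<le> N" using iN m by simp
  obtain qb where qb: "qb < length w" "w ! qb = Suc i" using pos_of[of "Suc i"] iN2 by auto
  obtain qc where qc: "qc < length w" "w ! qc = i + 2" using pos_of[of "i + 2"] iN2 by auto
  have Aqb: "A qb = 1" using W1[OF qb(1)] qb m by simp
  have Bqc: "Bc qc = 0" using W2[OF qc(1)] qc m by simp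
  have "qb \<noteq> p0" using qb x0i by auto
  moreover have "\<not> qb < p0" using A_strict[of qb p0] qb a0 p0_facts(1) m by auto
  ultimately have pb: "p0 < qb" by simp
  have "qc \<noteq> p0" using qc x0i by auto
  moreover have "\<not> qc < p0"
  proof
    assume "qc < p0"
    have "Bc qc < Bc p0" unfolding Bc_def
      using cnt_take_strict[of qc p0 w "\<lambda>y. i + m < y \<and> y \<le> i + 2 * m"] \<open>qc < p0\<close> p0_facts(1) qc m by simp
    then show False using jk a0 by simp
  qed
  ultimately have pc: "p0 < qc" by simp
  have cb: "qc < qb"
  proof (rule ccontr)
    assume "\<not> qc < qb"
    moreover have "qb \<noteq> qc" using qb qc by auto
    ultimately have bc: "qb < qc" by simp
    define z2 where "z2 = drop (Suc p0) z"
    define d where "d = qb - Suc p0"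
    define Z where "Z = take d z2"
    have dl: "d < length z2" unfolding d_def z2_def using pb qb lz by simp
    have z2d: "z2 ! d = i" unfolding z2_def d_def using pb qb lz z_nth[OF qb(1)] m
      by (simp add: gg_def)
    define R where "R = drop (Suc d) z2"
    have e: "z2 = Z @ i # R" unfolding Z_def R_def using id_take_nth_drop[OF dl] by (simp only: z2d)
    have "unbr i 0 (Suc p0) z2 = unbr i 0 (Suc p0) Z @ unbr i (cn i 0 Z) (Suc p0 + length Z) (i # R)"
      unfolding e unbr_append by simp
    moreover have "unbr i 0 (Suc p0) z2 = []" using p0_facts(4) z2_def by simp
    ultimately have "cn i 0 Z \<noteq> 0" by (cases "cn i 0 Z") auto
    then have "0 < cnt (Suc i) Z" using cn_le[of i 0 Z] by linarith
    then have "filter (\<lambda>y. y = Suc i) Z \<noteq> []" by auto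
    then have "Suc i \<in> set Z" by (auto simp: filter_empty_conv)
    then obtain t where t: "t < length Z" "Z ! t = Suc i" by (auto simp: in_set_conv_nth)
    define r where "r = Suc p0 + t"
    have rb: "r < qb" and zr: "z ! r = Suc i" unfolding r_def using t pb qb lz
      unfolding Z_def z2_def d_def by auto
    have rl: "r < length w" using rb qb by simp
    have "gg i m (w ! r) = Suc i" using zr z_nth[OF rl] by simp
    then have "w ! r = i + 2" using gg_eq_Si[OF m1] m by simp
    then have "r = qc" using pos_uniq[OF rl qc(1)] qc by simp
    then show False using rb bc by simp
  qed
  have "v = map (swap_vals i (Suc i)) w"
  proof (rule nth_equalityI)
    show "length v = length (map (swap_vals i (Suc i)) w)" unfolding v_def
      by (simp add: std_length lz)
  next
    fix q assume "q < length v"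
    then have q: "q < length w" unfolding v_def by (simp add: std_length lz)
    note vq = v_nth[OF q]
    consider "q = p0" | "q = qb" | "q = qc" | "q \<noteq> p0 \<and> q \<noteq> qb \<and> q \<noteq> qc" by blast
    then show "v ! q = map (swap_vals i (Suc i)) w ! q"
    proof cases
      case 1 then show ?thesis using vq x0i jk a0 q m by (simp add: swap_vals_def)
    next
      case 2 then show ?thesis using vq qb Aqb pb m q by (simp add: swap_vals_def)
    next
      case 3 then show ?thesis using vq qc Bqc pc m q by (simp add: swap_vals_def)
    next
      case 4
      then have "w ! q \<noteq> i" "w ! q \<noteq> Suc i" "w ! q \<noteq> i + 2"
        using pos_uniq[OF q] p0_facts(1) qb qc x0i by metis+
      then show ?thesis using vq q m by (simp add: swap_vals_def)
    qed
  qed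
  then show ?thesis using qb qc x0i pc cb by blast
qed

lemma case1:
  assumes m: "m = 1" and a1: "A p0 = 1"
  shows "\<exists>qa qc. qa < length w \<and> qc < length w \<and> w ! qa = i \<and> w ! p0 = Suc i \<and> w ! qc = i + 2
    \<and> qc < qa \<and> qa < p0 \<and> v = map (swap_vals (Suc i) (i + 2)) w"
proof -
  have x0i: "w ! p0 = Suc i" using x0_val a1 unfolding x0_def by simp
  have iN2: "i + 2 \<le> N" using iN m by simp
  obtain qa where qa: "qa < length w" "w ! qa = i" using pos_of[of "i"] iN2 i1 by auto
  obtain qc where qc: "qc < length w" "w ! qc = i + 2" using pos_of[of "i + 2"] iN2 by auto
  have Aqa: "A qa = 0" using W1[OF qa(1)] qa m by simp
  have Bqc: "Bc qc = 0" using W2[OF qc(1)] qc m by simp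
  have "qa \<noteq> p0" using qa x0i by auto
  moreover have "\<not> p0 < qa" using A_strict[of p0 qa] qa a1 x0i Aqa m by auto
  ultimately have ap: "qa < p0" by simp
  have "qc \<noteq> p0" using qc x0i by auto
  moreover have "\<not> p0 < qc" using Bc_mono[of p0 qc] Bqc jk a1 by auto
  ultimately have cp: "qc < p0" by simp
  have ca: "qc < qa"
  proof (rule ccontr)
    assume "\<not> qc < qa"
    moreover have "qa \<noteq> qc" using qa qc by auto
    ultimately have ac: "qa < qc" by simp
    define Y where "Y = take p0 z"
    define Z where "Z = drop (Suc qc) Y"
    define Y1 where "Y1 = take (Suc qc) Y"
    have YY: "Y = Y1 @ Z" unfolding Y1_def Z_def by simp
    have lY: "length Y = p0" unfolding Y_def using p0_facts(1) lz by simp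
    have Y1e: "Y1 = take qc Y @ [Suc i]"
    proof -
      have "Y ! qc = z ! qc" unfolding Y_def using cp by simp
      also have "... = Suc i" using z_nth[OF qc(1)] qc m by (simp add: gg_def)
      finally show ?thesis unfolding Y1_def using cp lY by (simp add: take_Suc_conv_app_nth)
    qed
    have c1: "1 \<le> cn i 0 Y1" unfolding Y1e cn_append by simp
    have "cnt i Z = 0"
    proof -
      have "\<forall>t < length Z. Z ! t \<noteq> i"
      proof (intro allI impI)
        fix t assume t: "t < length Z"
        define r where "r = Suc qc + t"
        have lZ: "length Z = p0 - Suc qc" unfolding Z_def using lY by simp
        have rp: "r < p0" unfolding r_def using t lZ by simp
        have "Z ! t = Y ! r" unfolding Z_def r_def using t lZ lY by simp
        also have "... = z ! r" unfolding Y_def using rp by simp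
        finally have zr: "Z ! t = z ! r" .
        have rl: "r < length w" using rp p0_facts(1) by simp
        show "Z ! t \<noteq> i"
        proof
          assume "Z ! t = i"
          then have "gg i m (w ! r) = i" using zr z_nth[OF rl] by simp
          then have "i \<le> w ! r" "w ! r \<le> Suc i" using gg_eq_i m by auto
          then have "w ! r = i \<or> w ! r = Suc i" by auto
          then have "r = qa \<or> r = p0" using pos_uniq[OF rl] qa x0i p0_facts(1) by metis
          then show False using rp ac unfolding r_def by auto
        qed
      qed
      then show ?thesis by (auto simp: filter_empty_conv in_set_conv_nth)
    qed
    have "cn i 0 Y1 + cnt (Suc i) Z + length (unbr i (cn i 0 Y1) 0 Z) = cn i (cn i 0 Y1) Z + cnt i Z"
      by (rule cn_balance)
    then have "1 \<le> cn i (cn i 0 Y1) Z" using c1 \<open>cnt i Z = 0\<close> by linarith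
    moreover have "cn i (cn i 0 Y1) Z = 0" using p0_facts(3) unfolding Y_def[symmetric] YY cn_append .
    ultimately show False by simp
  qed
  have "v = map (swap_vals (Suc i) (i + 2)) w"
  proof (rule nth_equalityI)
    show "length v = length (map (swap_vals (Suc i) (i + 2)) w)" unfolding v_def
      by (simp add: std_length lz)
  next
    fix q assume "q < length v"
    then have q: "q < length w" unfolding v_def by (simp add: std_length lz)
    note vq = v_nth[OF q]
    consider "q = p0" | "q = qa" | "q = qc" | "q \<noteq> p0 \<and> q \<noteq> qa \<and> q \<noteq> qc" by blast
    then show "v ! q = map (swap_vals (Suc i) (i + 2)) w ! q"
    proof cases
      case 1 then show ?thesis using vq x0i jk a1 q m by (simp add: swap_vals_def)
    next
      case 2 then show ?thesis using vq qa Aqa ap m q by (simp add: swap_vals_def)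
    next
      case 3 then show ?thesis using vq qc Bqc cp m q by (simp add: swap_vals_def)
    next
      case 4
      then have "w ! q \<noteq> i" "w ! q \<noteq> Suc i" "w ! q \<noteq> i + 2"
        using pos_uniq[OF q] p0_facts(1) qa qc x0i by metis+
      then show ?thesis using vq q m by (simp add: swap_vals_def)
    qed
  qed
  then show ?thesis using qa qc x0i ap ca by blast
qed

lemma A_p0_le: "A p0 \<le> m" using x0_range x0_val by simp

end

lemma row_word_map: "row_word (map (map f) T) = map f (row_word T)"
  unfolding row_word_def by (simp add: rev_map map_concat)

lemma shape_map: "shape (map (map f) T) = shape T"
  unfolding shape_def by (simp add: comp_def)

lemma chunks_concat: "chunks (map length xs) (concat xs) = xs"
  by (induction xs) auto

lemma chunks_props: "length w = sum_list ls \<Longrightarrow> concat (chunks ls w) = w \<and> map length (chunks ls w) = ls"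
proof (induction ls arbitrary: w)
  case Nil then show ?case by simp
next
  case (Cons l ls)
  have "length (drop l w) = sum_list ls" using Cons.prems by simp
  from Cons.IH[OF this] show ?case using Cons.prems by (simp add: min_def)
qed

lemma tab_row: "tab_of_word (shape T) (row_word T) = T"
  unfolding tab_of_word_def shape_def row_word_def
  by (metis chunks_concat rev_map rev_rev_ident)

lemma length_row_word: "length (row_word T) = sum_list (shape T)"
  unfolding row_word_def shape_def by (simp add: length_concat rev_map[symmetric] sum_list_rev)

lemma row_word_tab: "length v = sum_list sh \<Longrightarrow> row_word (tab_of_word sh v) = v"
  unfolding tab_of_word_def row_word_def using chunks_props[of v "rev sh"] by simp

lemma shape_tab: "length v = sum_list sh \<Longrightarrow> shape (tab_of_word sh v) = sh"
  unfolding tab_of_word_def shape_def using chunks_props[of v "rev sh"] by (simp add: rev_map[symmetric])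

lemma collapse_gg: "collapse i m T = map (map (gg i m)) T"
  unfolding collapse_def gg_def by simp

lemma distinct_concat_rev: "distinct (concat (rev xs)) = distinct (concat xs)"
proof (induction xs)
  case Nil then show ?case by simp
next
  case (Cons x xs)
  then show ?case by (auto simp: distinct_append)
qed

lemma swap_close: "swap_vals a (Suc a) x \<le> Suc x" "x \<le> Suc (swap_vals a (Suc a) x)"
  unfolding swap_vals_def by auto

lemma swap_mono: "x < y \<Longrightarrow> \<not> (x = a \<and> y = Suc a) \<Longrightarrow> swap_vals a (Suc a) x < swap_vals a (Suc a) y"
  unfolding swap_vals_def by auto

lemma swap_inj: "inj (swap_vals a b)"
  unfolding inj_def swap_vals_def by auto

lemma swap_invol: "swap_vals a b (swap_vals a b x) = x"
  unfolding swap_vals_def by auto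

definition off :: "tableau \<Rightarrow> nat \<Rightarrow> nat" where
  "off T j = length (concat (rev (drop (Suc j) T)))"

lemma rw_split: "j < length T \<Longrightarrow>
   row_word T = concat (rev (drop (Suc j) T)) @ T ! j @ concat (rev (take j T))"
proof -
  assume j: "j < length T"
  have e: "T = take j T @ T ! j # drop (Suc j) T" using j by (rule id_take_nth_drop)
  have "rev T = rev (take j T @ T ! j # drop (Suc j) T)" using e by (rule arg_cong)
  then have "rev T = rev (drop (Suc j) T) @ T ! j # rev (take j T)" by simp
  then show ?thesis unfolding row_word_def by simp
qed

lemma rw_nth_range: "j < length T \<Longrightarrow> off T j \<le> q \<Longrightarrow> q < off T j + length (T ! j) \<Longrightarrow>
   row_word T ! q = T ! j ! (q - off T j)"
  unfolding off_def by (subst rw_split) (auto simp: nth_append)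

lemma rw_nth: "j < length T \<Longrightarrow> k < length (T ! j) \<Longrightarrow> row_word T ! (off T j + k) = T ! j ! k"
  using rw_nth_range[of j T "off T j + k"] by simp

lemma rw_len: "j < length T \<Longrightarrow> off T j + length (T ! j) \<le> length (row_word T)"
proof -
  assume j: "j < length T"
  have "length (row_word T) = off T j + length (T ! j) + length (concat (rev (take j T)))"
    unfolding off_def by (subst rw_split[OF j]) simp
  then show ?thesis by simp
qed

lemma off_Suc: "Suc j < length T \<Longrightarrow> off T j = off T (Suc j) + length (T ! Suc j)"
proof -
  assume j: "Suc j < length T"
  have "drop (Suc j) T = T ! Suc j # drop (Suc (Suc j)) T" using j by (rule Cons_nth_drop_Suc[symmetric])
  then show ?thesis unfolding off_def by simp
qed

lemma syt_row: "T \<in> SYT lam \<Longrightarrow> j < length T \<Longrightarrow> sorted_wrt (<) (T ! j)"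
  unfolding SYT_def by auto

lemma syt_col: "T \<in> SYT lam \<Longrightarrow> Suc j < length T \<Longrightarrow> k < length (T ! Suc j) \<Longrightarrow>
   k < length (T ! j) \<and> T ! j ! k < T ! Suc j ! k"
  unfolding SYT_def by blast

lemma syt_w: "T \<in> SYT lam \<Longrightarrow> distinct (row_word T) \<and> set (row_word T) = {1..sum_list lam}"
  unfolding SYT_def row_word_def using distinct_concat_rev by auto

lemma syt_len: "T \<in> SYT lam \<Longrightarrow> length (row_word T) = sum_list lam"
  using length_row_word[of T] unfolding SYT_def by auto

lemma syt_pos: "T \<in> SYT lam \<Longrightarrow> j < length T \<Longrightarrow> k < length (T ! j) \<Longrightarrow> q < length (row_word T) \<Longrightarrow>
   row_word T ! q = T ! j ! k \<Longrightarrow> q = off T j + k"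
proof -
  assume a: "T \<in> SYT lam" "j < length T" "k < length (T ! j)" "q < length (row_word T)" "row_word T ! q = T ! j ! k"
  have l: "off T j + k < length (row_word T)" using rw_len[OF a(2)] a(3) by simp
  have "row_word T ! q = row_word T ! (off T j + k)" using rw_nth[OF a(2,3)] a(5) by simp
  then show ?thesis using nth_eq_iff_index_eq[OF conjunct1[OF syt_w[OF a(1)]] a(4) l] by simp
qed

lemma sorted_nth_less: "sorted_wrt (<) (r :: nat list) \<Longrightarrow> k1 < length r \<Longrightarrow> k2 < length r \<Longrightarrow> r ! k1 < r ! k2 \<Longrightarrow> k1 < k2"
proof (rule ccontr)
  assume a: "sorted_wrt (<) r" "k1 < length r" "k2 < length r" "r ! k1 < r ! k2" "\<not> k1 < k2"
  show False
  proof (cases "k1 = k2")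
    case True then show False using a by simp
  next
    case False
    then have "k2 < k1" using a by simp
    then have "r ! k2 < r ! k1" using a by (simp add: sorted_wrt_iff_nth_less)
    then show False using a by simp
  qed
qed

lemma sorted_nth_lt: "sorted_wrt (<) r \<Longrightarrow> k1 < k2 \<Longrightarrow> k2 < length r \<Longrightarrow> r ! k1 < r ! k2"
  by (simp add: sorted_wrt_iff_nth_less)

lemma SYT_swap:
  assumes T: "T \<in> SYT lam" and a: "a \<in> set (concat T)" "Suc a \<in> set (concat T)"
    and nrow: "\<And>j. j < length T \<Longrightarrow> \<not> (a \<in> set (T ! j) \<and> Suc a \<in> set (T ! j))"
    and ncol: "\<And>j k. Suc j < length T \<Longrightarrow> k < length (T ! Suc j) \<Longrightarrow> \<not> (T ! j ! k = a \<and> T ! Suc j ! k = Suc a)"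
  shows "map (map (swap_vals a (Suc a))) T \<in> SYT lam"
proof -
  let ?s = "swap_vals a (Suc a)"
  have T0: "shape T = lam" "distinct (concat T)" "set (concat T) = {1..sum_list lam}"
    "\<forall>r\<in>set T. sorted_wrt (<) r"
    "\<forall>j k. Suc j < length T \<and> k < length (T ! Suc j) \<longrightarrow> k < length (T ! j) \<and> T ! j ! k < T ! Suc j ! k"
    using T unfolding SYT_def by auto
  have c: "concat (map (map ?s) T) = map ?s (concat T)" by (simp add: map_concat)
  have "shape (map (map ?s) T) = lam" using T0(1) shape_map by metis
  moreover have "distinct (concat (map (map ?s) T))" unfolding c using T0(2) swap_inj
    by (simp add: distinct_map inj_on_def inj_def)
  moreover have "set (concat (map (map ?s) T)) = {1..sum_list lam}"
  proof -
    have "?s ` set (concat T) = set (concat T)"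
    proof
      show "?s ` set (concat T) \<subseteq> set (concat T)" using a unfolding swap_vals_def by auto
      show "set (concat T) \<subseteq> ?s ` set (concat T)"
      proof
        fix x assume "x \<in> set (concat T)"
        then have "?s x \<in> set (concat T)" using a unfolding swap_vals_def by auto
        then show "x \<in> ?s ` set (concat T)" using swap_invol[of a "Suc a" x] by (metis image_eqI)
      qed
    qed
    then show ?thesis unfolding c using T0(3) by simp
  qed
  moreover have "\<forall>r\<in>set (map (map ?s) T). sorted_wrt (<) r"
  proof
    fix r' assume "r' \<in> set (map (map ?s) T)"
    then obtain j where j: "j < length T" "r' = map ?s (T ! j)" by (auto simp: in_set_conv_nth)
    have sj: "sorted_wrt (<) (T ! j)" using T0(4) j(1) by simp
    have "sorted_wrt (\<lambda>x y. ?s x < ?s y) (T ! j)"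
    proof (rule sorted_wrt_mono_rel[OF _ sj])
      fix x y assume xy: "x \<in> set (T ! j)" "y \<in> set (T ! j)" "x < y"
      have "\<not> (x = a \<and> y = Suc a)" using nrow[OF j(1)] xy(1,2) by auto
      then show "?s x < ?s y" by (rule swap_mono[OF xy(3)])
    qed
    then show "sorted_wrt (<) r'" unfolding j(2) by (simp add: sorted_wrt_map)
  qed
  moreover have "\<forall>j k. Suc j < length (map (map ?s) T) \<and> k < length (map (map ?s) T ! Suc j) \<longrightarrow>
      k < length (map (map ?s) T ! j) \<and> map (map ?s) T ! j ! k < map (map ?s) T ! Suc j ! k"
  proof (intro allI impI)
    fix j k assume h: "Suc j < length (map (map ?s) T) \<and> k < length (map (map ?s) T ! Suc j)"
    then have h': "Suc j < length T" "k < length (T ! Suc j)" by auto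
    then have cc: "k < length (T ! j)" "T ! j ! k < T ! Suc j ! k" using T0(5) by auto
    have "?s (T ! j ! k) < ?s (T ! Suc j ! k)" by (rule swap_mono[OF cc(2) ncol[OF h']])
    then show "k < length (map (map ?s) T ! j) \<and> map (map ?s) T ! j ! k < map (map ?s) T ! Suc j ! k"
      using cc h' by simp
  qed
  ultimately show ?thesis unfolding SYT_def by blast
qed

lemma find_upt_Some: "q < n \<Longrightarrow> P q \<Longrightarrow> (\<forall>j<q. \<not> P j) \<Longrightarrow> List.find P [0..<n] = Some q"
proof -
  assume a: "q < n" "P q" "\<forall>j<q. \<not> P j"
  have "q < length [0..<n] \<and> P ([0..<n] ! q) \<and> q = [0..<n] ! q \<and> (\<forall>j<q. \<not> P ([0..<n] ! j))"
    using a by simp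
  then show ?thesis unfolding find_Some_iff by blast
qed

lemma find_pos:
  assumes d: "distinct w" and q: "q < length w" and y: "w ! q = y"
  shows "the (List.find (\<lambda>k. w ! k = y) [0..<length w]) = q"
proof -
  have "\<forall>j<q. \<not> w ! j = y" using nth_eq_iff_index_eq[OF d] q y by fastforce
  then show ?thesis using find_upt_Some[of q "length w" "\<lambda>k. w ! k = y"] q y by simp
qed

lemma D_op_swap: "D_op j X = Some Y \<Longrightarrow> 1 < j \<Longrightarrow> \<exists>a. Y = map (map (swap_vals a (Suc a))) X"
  unfolding D_op_def Let_def
  by (auto split: if_splits intro: exI[of _ "j - 1"] exI[of _ j])

lemma excl0:
  assumes T: "T \<in> SYT lam"
    and pos: "pa < pc" "pc < pb" "pb < length (row_word T)"
    and vals: "row_word T ! pa = i" "row_word T ! pb = Suc i" "row_word T ! pc = i + 2"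
  shows "\<And>j. j < length T \<Longrightarrow> \<not> (i \<in> set (T ! j) \<and> Suc i \<in> set (T ! j))"
    "\<And>j k. Suc j < length T \<Longrightarrow> k < length (T ! Suc j) \<Longrightarrow> \<not> (T ! j ! k = i \<and> T ! Suc j ! k = Suc i)"
proof -
  let ?w = "row_word T"
  fix j assume j: "j < length T"
  show "\<not> (i \<in> set (T ! j) \<and> Suc i \<in> set (T ! j))"
  proof
    assume "i \<in> set (T ! j) \<and> Suc i \<in> set (T ! j)"
    then obtain k1 k2 where k: "k1 < length (T ! j)" "T ! j ! k1 = i" "k2 < length (T ! j)" "T ! j ! k2 = Suc i"
      by (auto simp: in_set_conv_nth)
    have s: "sorted_wrt (<) (T ! j)" using syt_row[OF T j] .
    have k12: "k1 < k2" using sorted_nth_less[OF s k(1,3)] k by simp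
    have pa: "pa = off T j + k1" using syt_pos[OF T j k(1)] pos vals k by simp
    have pb: "pb = off T j + k2" using syt_pos[OF T j k(3)] pos vals k by simp
    have "?w ! pc = T ! j ! (pc - off T j)" using rw_nth_range[OF j] pa pb pos k by simp
    moreover have "k1 < pc - off T j" "pc - off T j < k2" using pa pb pos by auto
    ultimately have "i < ?w ! pc" "?w ! pc < Suc i"
      using sorted_nth_lt[OF s] k by (metis less_trans)+
    then show False by simp
  qed
next
  let ?w = "row_word T"
  fix j k assume j: "Suc j < length T" and k: "k < length (T ! Suc j)"
  show "\<not> (T ! j ! k = i \<and> T ! Suc j ! k = Suc i)"
  proof
    assume e: "T ! j ! k = i \<and> T ! Suc j ! k = Suc i"
    have kj: "k < length (T ! j)" using syt_col[OF T j k] by simp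
    have j': "j < length T" using j by simp
    have pa: "pa = off T j + k" using syt_pos[OF T j' kj] pos vals e by simp
    have pb: "pb = off T (Suc j) + k" using syt_pos[OF T j k] pos vals e by simp
    have "off T j = off T (Suc j) + length (T ! Suc j)" using off_Suc[OF j] .
    then show False using pa pb pos k by simp
  qed
qed

lemma excl1:
  assumes T: "T \<in> SYT lam"
    and pos: "pc < pa" "pa < pb" "pb < length (row_word T)"
    and vals: "row_word T ! pa = i" "row_word T ! pb = Suc i" "row_word T ! pc = i + 2"
  shows "\<And>j. j < length T \<Longrightarrow> \<not> (Suc i \<in> set (T ! j) \<and> Suc (Suc i) \<in> set (T ! j))"
    "\<And>j k. Suc j < length T \<Longrightarrow> k < length (T ! Suc j) \<Longrightarrow> \<not> (T ! j ! k = Suc i \<and> T ! Suc j ! k = Suc (Suc i))"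
proof -
  let ?w = "row_word T"
  have dw: "distinct ?w" using syt_w[OF T] by simp
  fix j assume j: "j < length T"
  show "\<not> (Suc i \<in> set (T ! j) \<and> Suc (Suc i) \<in> set (T ! j))"
  proof
    assume "Suc i \<in> set (T ! j) \<and> Suc (Suc i) \<in> set (T ! j)"
    then obtain k1 k2 where k: "k1 < length (T ! j)" "T ! j ! k1 = Suc i" "k2 < length (T ! j)" "T ! j ! k2 = Suc (Suc i)"
      by (auto simp: in_set_conv_nth)
    have s: "sorted_wrt (<) (T ! j)" using syt_row[OF T j] .
    have k12: "k1 < k2" using sorted_nth_less[OF s k(1,3)] k by simp
    have pb: "pb = off T j + k1" using syt_pos[OF T j k(1)] pos vals k by simp
    have pc: "pc = off T j + k2" using syt_pos[OF T j k(3)] pos vals k by simp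
    show False using pb pc k12 pos by simp
  qed
next
  let ?w = "row_word T"
  have dw: "distinct ?w" using syt_w[OF T] by simp
  fix j k assume j: "Suc j < length T" and k: "k < length (T ! Suc j)"
  show "\<not> (T ! j ! k = Suc i \<and> T ! Suc j ! k = Suc (Suc i))"
  proof
    assume e: "T ! j ! k = Suc i \<and> T ! Suc j ! k = Suc (Suc i)"
    have kj: "k < length (T ! j)" using syt_col[OF T j k] by simp
    have j': "j < length T" using j by simp
    have pb: "pb = off T j + k" using syt_pos[OF T j' kj] pos vals e by simp
    have pc: "pc = off T (Suc j) + k" using syt_pos[OF T j k] pos vals e by simp
    have oS: "off T j = off T (Suc j) + length (T ! Suc j)" using off_Suc[OF j] .
    have sj: "sorted_wrt (<) (T ! Suc j)" using syt_row[OF T j] .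
    show False
    proof (cases "pa < off T j")
      case True
      define k' where "k' = pa - off T (Suc j)"
      have k': "k < k'" "k' < length (T ! Suc j)" using True oS pc pos unfolding k'_def by auto
      have "?w ! pa = T ! Suc j ! k'" unfolding k'_def using rw_nth_range[OF j] True oS pc pos by simp
      moreover have "T ! Suc j ! k < T ! Suc j ! k'" using sorted_nth_lt[OF sj k'] .
      ultimately show False using vals e by simp
    next
      case False
      define k' where "k' = pa - off T j"
      have k': "k' < k" using False pb pos unfolding k'_def by auto
      have "?w ! pa = T ! j ! k'" unfolding k'_def using rw_nth_range[OF j'] False pb pos kj by simp
      then have tj: "T ! j ! k' = i" using vals by simp
      have k'l: "k' < length (T ! Suc j)" using k' k by simp
      have c1: "T ! j ! k' < T ! Suc j ! k'" using syt_col[OF T j k'l] by simp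
      have c2: "T ! Suc j ! k' < T ! Suc j ! k" using sorted_nth_lt[OF sj k' k] .
      have y: "T ! Suc j ! k' = Suc i" using c1 c2 tj e by simp
      have l: "off T (Suc j) + k' < length ?w" using rw_len[OF j] k'l by simp
      have "?w ! (off T (Suc j) + k') = Suc i" using rw_nth[OF j k'l] y by simp
      then have "off T (Suc j) + k' = pb" using nth_eq_iff_index_eq[OF dw l pos(3)] vals by simp
      then show False using pb oS k'l k' by simp
    qed
  qed
qed

theorem proposition4p2:
  fixes lam :: "nat list" and T T' :: tableau and I :: "nat set"
  assumes "is_partition lam"
    and "cs_edge lam T I T'"
  shows "de_adj lam T T' \<longleftrightarrow> card I = 3"
proof -
  from assms(2) obtain i m b' where T: "T \<in> SYT lam" and I: "I = {i..i + 2 * m}"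
    and dy: "dyck_interval (row_word T) i m" and fb: "f_tab i (collapse i m T) = Some b'"
    and T': "T' = std_tab b'" unfolding cs_edge_def by blast
  define w where "w = row_word T"
  define N where "N = sum_list lam"
  have dw: "distinct w" and sw: "set w = {1..N}" using syt_w[OF T] unfolding w_def N_def by auto
  have lw: "length w = N" using syt_len[OF T] unfolding w_def N_def .
  have m1: "1 \<le> m" and i1: "1 \<le> i" and iN: "i + 2 * m \<le> N"
    and rs: "rsk_P (filter (\<lambda>x. i \<le> x \<and> x \<le> i + 2 * m) w) = [[i..<i + m + 1], [i + m + 1..<i + 2 * m + 1]]"
    using dy lw unfolding dyck_interval_def w_def by auto
  define z where "z = map (gg i m) w"
  have rwc: "row_word (collapse i m T) = z" unfolding z_def w_def collapse_gg row_word_map ..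
  have shc: "shape (collapse i m T) = shape T" unfolding collapse_gg shape_map ..
  have fw: "map_option (tab_of_word (shape T)) (f_word i z) = Some b'"
    using fb unfolding f_tab_def rwc shc .
  then obtain w2 where fw2: "f_word i z = Some w2" and b': "b' = tab_of_word (shape T) w2" by auto
  have une: "unbr i 0 0 z \<noteq> []" and w2: "w2 = z[last (unbr i 0 0 z) := Suc i]"
    using fw2 unfolding f_word_def Let_def by (auto split: if_splits)
  interpret W: wset w N i m
    using dw sw m1 i1 iN rs une unfolding z_def by unfold_locales auto
  have Wz: "W.z = z" unfolding W.z_def z_def ..
  have w2': "w2 = W.z[W.p0 := Suc i]" unfolding w2 W.p0_def Wz ..
  have lsh: "sum_list (shape T) = length w" unfolding w_def by (simp add: length_row_word)
  have lw2: "length w2 = sum_list (shape T)" using lsh unfolding w2 z_def by simp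
  have rb: "row_word b' = w2" unfolding b' using row_word_tab[OF lw2] .
  have sb: "shape b' = shape T" unfolding b' using shape_tab[OF lw2] .
  have lv: "length W.v = length w" unfolding W.v_def by (simp add: std_length W.lz)
  have T'v: "T' = tab_of_word (shape T) W.v" unfolding T' std_tab_def rb sb w2' W.v_def ..
  have rT': "row_word T' = W.v" unfolding T'v using row_word_tab lv lsh by simp
  have cI: "card I = 2 * m + 1" unfolding I by simp
  have p0l: "W.p0 < length w" using W.p0_facts(1) .
  have vp0: "W.v ! W.p0 = w ! W.p0 + m" using W.v_p0 .
  show ?thesis
  proof
    assume "de_adj lam T T'"
    then obtain j where j: "1 < j" "D_op j T = Some T' \<or> D_op j T' = Some T" unfolding de_adj_def by blast
    have "m \<le> 1"
    proof (cases "D_op j T = Some T'")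
      case True
      then obtain a where "T' = map (map (swap_vals a (Suc a))) T" using D_op_swap j(1) by blast
      then have "W.v = map (swap_vals a (Suc a)) w" using rT' unfolding w_def by (simp add: row_word_map)
      then have "W.v ! W.p0 = swap_vals a (Suc a) (w ! W.p0)" using p0l by simp
      then show ?thesis using swap_close(1)[of a "w ! W.p0"] vp0 by simp
    next
      case False
      then have "D_op j T' = Some T" using j by simp
      then obtain a where "T = map (map (swap_vals a (Suc a))) T'" using D_op_swap j(1) by blast
      then have "w = map (swap_vals a (Suc a)) W.v" using rT' unfolding w_def by (simp add: row_word_map)
      then have "w ! W.p0 = swap_vals a (Suc a) (W.v ! W.p0)" using p0l lv by (metis nth_map)
      then show ?thesis using swap_close(2)[of "W.v ! W.p0" a] vp0 by simp
    qed
    then show "card I = 3" using cI m1 by simp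
  next
    assume "card I = 3"
    then have m: "m = 1" using cI by simp
    have Tsh: "tab_of_word (shape T) (map f w) = map (map f) T" for f
      using tab_row[of "map (map f) T"] unfolding row_word_map shape_map w_def .
    have iN2: "Suc (Suc i) \<le> N" using iN m by simp
    have inT: "x \<in> set (concat T)" if "1 \<le> x" "x \<le> N" for x
      using T that unfolding SYT_def N_def by auto
    have jr: "1 < Suc i" "Suc i < sum_list lam" using i1 iN2 unfolding N_def by auto
    consider "W.A W.p0 = 0" | "W.A W.p0 = 1" using W.A_p0_le m by linarith
    then show "de_adj lam T T'"
    proof cases
      case 1
      from W.case0[OF m 1] obtain qb qc where q: "qb < length w" "qc < length w" "w ! W.p0 = i"
        "w ! qb = Suc i" "w ! qc = i + 2" "W.p0 < qc" "qc < qb" and v: "W.v = map (swap_vals i (Suc i)) w"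
        by blast
      have T'e: "T' = map (map (swap_vals i (Suc i))) T" using T'v v Tsh by simp
      have fa: "the (List.find (\<lambda>k. w ! k = Suc i - 1) [0..<length w]) = W.p0"
        using find_pos[OF dw p0l] q by simp
      have fb: "the (List.find (\<lambda>k. w ! k = Suc i) [0..<length w]) = qb"
        using find_pos[OF dw q(1) q(4)] .
      have fc: "the (List.find (\<lambda>k. w ! k = Suc i + 1) [0..<length w]) = qc"
        using find_pos[OF dw q(2)] q by simp
      have D: "D_op (Suc i) T = Some T'"
        unfolding D_op_def Let_def w_def[symmetric] fa fb fc T'e using q by simp
      have "T' \<in> SYT lam" unfolding T'e
      proof (rule SYT_swap[OF T])
        show "i \<in> set (concat T)" "Suc i \<in> set (concat T)" using inT i1 iN2 by auto
        show "\<And>j. j < length T \<Longrightarrow> \<not> (i \<in> set (T ! j) \<and> Suc i \<in> set (T ! j))"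
          using excl0(1)[OF T, unfolded w_def[symmetric], OF q(6,7) q(1) q(3,4,5)] by blast
        show "\<And>j k. Suc j < length T \<Longrightarrow> k < length (T ! Suc j) \<Longrightarrow> \<not> (T ! j ! k = i \<and> T ! Suc j ! k = Suc i)"
          using excl0(2)[OF T, unfolded w_def[symmetric], OF q(6,7) q(1) q(3,4,5)] by blast
      qed
      then show ?thesis unfolding de_adj_def using T D jr by blast
    next
      case 2
      from W.case1[OF m 2] obtain qa qc where q: "qa < length w" "qc < length w" "w ! qa = i"
        "w ! W.p0 = Suc i" "w ! qc = i + 2" "qc < qa" "qa < W.p0" and v: "W.v = map (swap_vals (Suc i) (i + 2)) w"
        by blast
      have T'e: "T' = map (map (swap_vals (Suc i) (Suc (Suc i)))) T" using T'v v Tsh by simp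
      have fa: "the (List.find (\<lambda>k. w ! k = Suc i - 1) [0..<length w]) = qa"
        using find_pos[OF dw q(1)] q by simp
      have fb: "the (List.find (\<lambda>k. w ! k = Suc i) [0..<length w]) = W.p0"
        using find_pos[OF dw p0l q(4)] .
      have fc: "the (List.find (\<lambda>k. w ! k = Suc i + 1) [0..<length w]) = qc"
        using find_pos[OF dw q(2)] q by simp
      have D: "D_op (Suc i) T = Some T'"
        unfolding D_op_def Let_def w_def[symmetric] fa fb fc T'e using q by simp
      have "T' \<in> SYT lam" unfolding T'e
      proof (rule SYT_swap[OF T])
        show "Suc i \<in> set (concat T)" "Suc (Suc i) \<in> set (concat T)" using inT i1 iN2 by auto
        show "\<And>j. j < length T \<Longrightarrow> \<not> (Suc i \<in> set (T ! j) \<and> Suc (Suc i) \<in> set (T ! j))"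
          using excl1(1)[OF T, unfolded w_def[symmetric], OF q(6,7) p0l q(3,4,5)] by blast
        show "\<And>j k. Suc j < length T \<Longrightarrow> k < length (T ! Suc j) \<Longrightarrow> \<not> (T ! j ! k = Suc i \<and> T ! Suc j ! k = Suc (Suc i))"
          using excl1(2)[OF T, unfolded w_def[symmetric], OF q(6,7) p0l q(3,4,5)] by blast
      qed
      then show ?thesis unfolding de_adj_def using T D jr by blast
    qed
  qed
qed

end
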